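(* For all integers $k\geq 1$, $i\geq k+3$ and $j\geq k+2$, we have $$R_k^{\mathcal{FO}}(i,j)=j+\Big\lfloor\frac{j-1}{k+1}\Big\rfloor,$$ where $\mathcal{FO}$ is the class of all forests.
   Context: All graphs are finite and simple. For a graph $G$ and a nonnegative integer $k$, a $k$-sparse $j$-set is a set of $j$ vertices of $G$ inducing a subgraph of maximum degree at most $k$; a $k$-dense $i$-set is a set of $i$ vertices of $G$ that is $k$-sparse in the complement of $G$ (i.e., each vertex of the set is non-adjacent to at most $k$ other vertices of the set). For a graph class $\mathcal{G}$, the $k$-defective Ramsey number $R_k^{\mathcal{G}}(i,j)$ is the smallest natural number $n$ such that every graph on $n$ vertices in $\mathcal{G}$ has either a $k$-dense $i$-set or a $k$-sparse $j$-set. A forest is a graph with no cycles. *)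

theory Defs
  imports Main
begin

definition simple_graph :: "nat \<Rightarrow> (nat \<Rightarrow> nat \<Rightarrow> bool) \<Rightarrow> bool" where
  "simple_graph n E \<longleftrightarrow>
     (\<forall>u v. E u v \<longrightarrow> E v u) \<and> (\<forall>v. \<not> E v v) \<and>
     (\<forall>u v. E u v \<longrightarrow> u < n \<and> v < n)"

definition is_cycle :: "(nat \<Rightarrow> nat \<Rightarrow> bool) \<Rightarrow> nat list \<Rightarrow> bool" where
  "is_cycle E cs \<longleftrightarrow> length cs \<ge> 3 \<and> distinct cs \<and>
     (\<forall>t. Suc t < length cs \<longrightarrow> E (cs ! t) (cs ! Suc t)) \<and>
     E (last cs) (hd cs)"

definition forest :: "nat \<Rightarrow> (nat \<Rightarrow> nat \<Rightarrow> bool) \<Rightarrow> bool" where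
  "forest n E \<longleftrightarrow> simple_graph n E \<and> (\<nexists>cs. is_cycle E cs)"

definition sparse_set :: "nat \<Rightarrow> (nat \<Rightarrow> nat \<Rightarrow> bool) \<Rightarrow> nat \<Rightarrow> nat \<Rightarrow> nat set \<Rightarrow> bool" where
  "sparse_set n E k j S \<longleftrightarrow> S \<subseteq> {0..<n} \<and> card S = j \<and>
     (\<forall>v\<in>S. card {u\<in>S. E v u} \<le> k)"

definition dense_set :: "nat \<Rightarrow> (nat \<Rightarrow> nat \<Rightarrow> bool) \<Rightarrow> nat \<Rightarrow> nat \<Rightarrow> nat set \<Rightarrow> bool" where
  "dense_set n E k i S \<longleftrightarrow> S \<subseteq> {0..<n} \<and> card S = i \<and>
     (\<forall>v\<in>S. card {u\<in>S. u \<noteq> v \<and> \<not> E v u} \<le> k)"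

definition forest_defective_ramsey :: "nat \<Rightarrow> nat \<Rightarrow> nat \<Rightarrow> nat" where
  "forest_defective_ramsey k i j =
     (LEAST n. \<forall>E. forest n E \<longrightarrow>
        (\<exists>S. dense_set n E k i S) \<or> (\<exists>S. sparse_set n E k j S))"

end

theory Submission
  imports Defs
begin

definition gpath :: "(nat \<Rightarrow> nat \<Rightarrow> bool) \<Rightarrow> nat set \<Rightarrow> nat list \<Rightarrow> bool" where
  "gpath E S P \<longleftrightarrow> P \<noteq> [] \<and> distinct P \<and> set P \<subseteq> S \<and>
     (\<forall>t. Suc t < length P \<longrightarrow> E (P ! t) (P ! Suc t))"

lemma card_sub_single: "A \<subseteq> {x} \<Longrightarrow> card A \<le> 1"
  using card_mono[of "{x}" A] by simp

lemma max_path_exists: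
  assumes "finite S" "x \<in> S"
  shows "\<exists>P. gpath E S P \<and> (\<forall>Q. gpath E S Q \<longrightarrow> length Q \<le> length P)"
proof -
  have "gpath E S [x]" using assms by (simp add: gpath_def)
  moreover have "\<forall>Q. gpath E S Q \<longrightarrow> length Q < Suc (card S)"
  proof (intro allI impI)
    fix Q assume "gpath E S Q"
    then have "distinct Q" "set Q \<subseteq> S" by (auto simp: gpath_def)
    then have "length Q \<le> card S" using assms(1)
      by (metis card_mono distinct_card)
    then show "length Q < Suc (card S)" by simp
  qed
  ultimately show ?thesis using ex_has_greatest_nat[of "gpath E S" "[x]" length "Suc (card S)"]
    by blast
qed

lemma end_nbr:
  assumes sym: "\<forall>u v. E u v \<longrightarrow> E v u" and irr: "\<forall>v. \<not> E v v"
    and acyc: "\<nexists>cs. is_cycle E cs"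
    and P: "gpath E S P" and maxP: "\<forall>Q. gpath E S Q \<longrightarrow> length Q \<le> length P"
    and y: "y \<in> S" "E (hd P) y"
  shows "Suc 0 < length P \<and> y = P ! 1"
proof -
  have ne: "P \<noteq> []" and dP: "distinct P" and sP: "set P \<subseteq> S"
    and cP: "\<forall>t. Suc t < length P \<longrightarrow> E (P ! t) (P ! Suc t)"
    using P by (auto simp: gpath_def)
  have hd0: "hd P = P ! 0" using ne by (simp add: hd_conv_nth)
  have yin: "y \<in> set P"
  proof (rule ccontr)
    assume yn: "y \<notin> set P"
    have "gpath E S (y # P)"
      unfolding gpath_def
    proof (intro conjI allI impI)
      show "distinct (y # P)" using yn dP by simp
      show "set (y # P) \<subseteq> S" using y sP by simp
      fix t assume "Suc t < length (y # P)"
      then show "E ((y # P) ! t) ((y # P) ! Suc t)"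
        using cP sym y(2) hd0 by (cases t) auto
    qed simp
    then show False using maxP by fastforce
  qed
  then obtain t where t: "t < length P" "y = P ! t" by (auto simp: in_set_conv_nth)
  have "t \<noteq> 0"
  proof
    assume "t = 0" then show False using irr y(2) hd0 t by simp
  qed
  moreover have "\<not> t \<ge> 2"
  proof
    assume t2: "t \<ge> 2"
    define cs where "cs = take (Suc t) P"
    have lcs: "length cs = Suc t" using t cs_def by simp
    have "is_cycle E cs"
      unfolding is_cycle_def
    proof (intro conjI allI impI)
      show "3 \<le> length cs" using lcs t2 by simp
      show "distinct cs" using dP cs_def by simp
      fix s assume "Suc s < length cs"
      then show "E (cs ! s) (cs ! Suc s)" using cP lcs cs_def t by simp
    next
      have "cs \<noteq> []" using lcs by auto
      then have "last cs = cs ! t" using lcs by (simp add: last_conv_nth)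
      also have "\<dots> = P ! t" using cs_def by simp
      finally have "last cs = P ! t" .
      moreover have "hd cs = P ! 0" using cs_def ne hd0 by simp
      ultimately show "E (last cs) (hd cs)" using sym y(2) t hd0 by metis
    qed
    then show False using acyc by blast
  qed
  ultimately have "t = 1" by linarith
  then show ?thesis using t by simp
qed

lemma low_deg_exists:
  assumes sym: "\<forall>u v. E u v \<longrightarrow> E v u" and irr: "\<forall>v. \<not> E v v"
    and acyc: "\<nexists>cs. is_cycle E cs"
    and S: "finite S" "S \<noteq> {}"
  shows "\<exists>v\<in>S. card {u\<in>S. E v u} \<le> 1"
proof -
  obtain x where "x \<in> S" using S by auto
  then obtain P where P: "gpath E S P" and maxP: "\<forall>Q. gpath E S Q \<longrightarrow> length Q \<le> length P"
    using max_path_exists S by blast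
  have "hd P \<in> S" using P by (auto simp: gpath_def)
  moreover have "{u\<in>S. E (hd P) u} \<subseteq> {P ! 1}"
    using end_nbr[OF sym irr acyc P maxP] by auto
  then have "card {u\<in>S. E (hd P) u} \<le> 1"
    by (rule card_sub_single)
  ultimately show ?thesis by blast
qed

lemma sep_step:
  fixes k :: nat
  assumes sym: "\<forall>u v. E u v \<longrightarrow> E v u"
    and fin: "finite S" and XS: "X \<subseteq> S" and dX: "d \<in> X" and cX: "card X \<ge> k + 2"
    and clos: "\<forall>x\<in>X-{d}. \<forall>y\<in>S. E x y \<longrightarrow> y \<in> X"
    and inner: "\<forall>v\<in>X-{d}. card {u\<in>X-{d}. E v u} \<le> k"
    and D'S: "D' \<subseteq> S - X" and cD': "card D' \<le> card (S - X) div (k+2)"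
    and D'sp: "\<forall>v\<in>(S-X)-D'. card {u\<in>(S-X)-D'. E v u} \<le> k"
  shows "\<exists>D\<subseteq>S. card D \<le> card S div (k+2) \<and> (\<forall>v\<in>S-D. card {u\<in>S-D. E v u} \<le> k)"
proof (intro exI[of _ "insert d D'"] conjI ballI)
  show "insert d D' \<subseteq> S" using D'S XS dX by auto
  have finX: "finite X" using XS fin finite_subset by blast
  have fD': "finite D'" using D'S fin finite_subset by blast
  have ci: "card (insert d D') \<le> card D' + 1" using fD' by (simp add: card_insert_if)
  have "card (S - X) = card S - card X" using finX XS by (simp add: card_Diff_subset)
  then have "card D' \<le> (card S - (k+2)) div (k+2)" using cD' cX
    by (metis diff_le_mono2 div_le_mono order_trans)
  moreover have "card S \<ge> k + 2" using cX card_mono[OF fin XS] by linarith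
  ultimately have "card D' + 1 \<le> card S div (k+2)"
    using le_div_geq[of "k+2" "card S"] by simp
  then show "card (insert d D') \<le> card S div (k+2)" using ci by simp
next
  fix v assume v: "v \<in> S - insert d D'"
  show "card {u\<in>S - insert d D'. E v u} \<le> k"
  proof (cases "v \<in> X")
    case True
    then have vX: "v \<in> X - {d}" using v by auto
    have "{u\<in>S - insert d D'. E v u} \<subseteq> {u\<in>X-{d}. E v u}"
    proof
      fix u assume u: "u \<in> {u\<in>S - insert d D'. E v u}"
      then have "u \<in> X" using clos vX by blast
      then show "u \<in> {u\<in>X-{d}. E v u}" using u by blast
    qed
    moreover have "finite {u\<in>X-{d}. E v u}" using finite_subset[OF XS fin] by simp
    ultimately show ?thesis using inner vX by (meson card_mono order_trans)
  next
    case False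
    then have vX: "v \<in> (S - X) - D'" using v by auto
    have "{u\<in>S - insert d D'. E v u} \<subseteq> {u\<in>(S-X)-D'. E v u}"
    proof
      fix u assume u: "u \<in> {u\<in>S - insert d D'. E v u}"
      have "u \<notin> X"
      proof
        assume "u \<in> X"
        then have ux: "u \<in> X - {d}" using u by auto
        have "E u v" using sym u by blast
        moreover have "v \<in> S" using vX by blast
        ultimately have "v \<in> X" using clos ux by blast
        then show False using vX by blast
      qed
      then show "u \<in> {u\<in>(S-X)-D'. E v u}" using u by auto
    qed
    moreover have "finite {u\<in>(S-X)-D'. E v u}" using fin by simp
    ultimately show ?thesis using D'sp vX by (meson card_mono order_trans)
  qed
qed

lemma sparse_delete:
  fixes k :: nat
  assumes sym: "\<forall>u v. E u v \<longrightarrow> E v u" and irr: "\<forall>v. \<not> E v v"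
    and acyc: "\<nexists>cs. is_cycle E cs" and k1: "k \<ge> 1"
  shows "finite S \<Longrightarrow> \<exists>D\<subseteq>S. card D \<le> card S div (k+2) \<and> (\<forall>v\<in>S-D. card {u\<in>S-D. E v u} \<le> k)"
proof (induction "card S" arbitrary: S rule: less_induct)
  case less
  note fin = less.prems
  show ?case
  proof (cases "\<exists>x\<in>S. card {u\<in>S. E x u} \<le> k \<and> (\<forall>y\<in>S. E x y \<longrightarrow> card {u\<in>S. E y u} \<le> k)")
    case True
    then obtain x where x: "x \<in> S" "card {u\<in>S. E x u} \<le> k"
      "\<forall>y\<in>S. E x y \<longrightarrow> card {u\<in>S. E y u} \<le> k" by blast
    have "card (S - {x}) < card S" using x fin by (meson card_Diff1_less)
    then obtain D where D: "D \<subseteq> S - {x}" "card D \<le> card (S - {x}) div (k+2)"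
      "\<forall>v\<in>(S-{x})-D. card {u\<in>(S-{x})-D. E v u} \<le> k"
      using less.hyps[of "S - {x}"] fin by auto
    show ?thesis
    proof (intro exI[of _ D] conjI ballI)
      show "D \<subseteq> S" using D by auto
      have "card (S - {x}) \<le> card S" using fin by (simp add: card_Diff1_le)
      then show "card D \<le> card S div (k+2)" using D(2) by (meson div_le_mono order_trans)
    next
      fix v assume v: "v \<in> S - D"
      show "card {u\<in>S-D. E v u} \<le> k"
      proof (cases "v = x \<or> E v x")
        case True
        then have "card {u\<in>S. E v u} \<le> k" using x sym v by auto
        moreover have "{u\<in>S-D. E v u} \<subseteq> {u\<in>S. E v u}" by auto
        moreover have "finite {u\<in>S. E v u}" using fin by simp
        ultimately show ?thesis by (meson card_mono order_trans)
      next
        case False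
        then have "{u\<in>S-D. E v u} = {u\<in>(S-{x})-D. E v u}" by auto
        moreover have "v \<in> (S-{x})-D" using v False by auto
        ultimately show ?thesis using D(3) by simp
      qed
    qed
  next
    case False
    note notA = False
    show ?thesis
    proof (cases "S = {}")
      case True
      then show ?thesis by auto
    next
      case False
      then obtain x0 where "x0 \<in> S" by auto
      then obtain P where P: "gpath E S P" and maxP: "\<forall>Q. gpath E S Q \<longrightarrow> length Q \<le> length P"
        using max_path_exists fin by blast
      have ne: "P \<noteq> []" and dP: "distinct P" and sP: "set P \<subseteq> S"
        and cP: "\<forall>t. Suc t < length P \<longrightarrow> E (P ! t) (P ! Suc t)"
        using P by (auto simp: gpath_def)
      have hd0: "hd P = P ! 0" using ne by (simp add: hd_conv_nth)
      have v0S: "hd P \<in> S" using sP ne by auto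
      have "{u\<in>S. E (hd P) u} \<subseteq> {P ! 1}"
        using end_nbr[OF sym irr acyc P maxP] by auto
      then have "card {u\<in>S. E (hd P) u} \<le> 1"
        by (rule card_sub_single)
      then have "card {u\<in>S. E (hd P) u} \<le> k" using k1 by simp
      then obtain y where y: "y \<in> S" "E (hd P) y" "\<not> card {u\<in>S. E y u} \<le> k"
        using notA v0S by blast
      then have l2: "Suc 0 < length P" and yv1: "y = P ! 1"
        using end_nbr[OF sym irr acyc P maxP] by auto
      define v1 where "v1 = P ! 1"
      have v1S: "v1 \<in> S" using y yv1 v1_def by simp
      define N1 where "N1 = {u\<in>S. E v1 u}"
      have cN1: "card N1 \<ge> k + 1" using y yv1 v1_def N1_def by simp
      have finN1: "finite N1" using fin N1_def by simp
      define L where "L = {u\<in>N1. \<forall>w\<in>S. E u w \<longrightarrow> w = v1}"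
      have LN1: "L \<subseteq> N1" using L_def by auto
      have finL: "finite L" using finN1 LN1 finite_subset by blast
      have v1L: "v1 \<notin> L" using irr L_def N1_def by auto
      have claim: "Suc (Suc 0) < length P \<and> u = P ! 2" if u: "u \<in> N1" "u \<notin> L" for u
      proof (rule ccontr)
        assume asm: "\<not> (Suc (Suc 0) < length P \<and> u = P ! 2)"
        have uS: "u \<in> S" and Eu: "E v1 u" using u N1_def by auto
        have "\<forall>w\<in>S. E u w \<longrightarrow> w = v1"
        proof (cases "u = hd P")
          case True
          then show ?thesis using end_nbr[OF sym irr acyc P maxP] v1_def by auto
        next
          case False
          have un: "u \<notin> set P"
          proof
            assume "u \<in> set P"
            then obtain t where t: "t < length P" "u = P ! t" by (auto simp: in_set_conv_nth)
            have "t \<noteq> 0" using False hd0 t by (metis)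
            moreover have "t \<noteq> 1" using irr Eu t v1_def by auto
            moreover have "t \<noteq> 2" using asm t by auto
            ultimately have t3: "t \<ge> 3" by linarith
            define cs where "cs = drop 1 (take (Suc t) P)"
            have lcs: "length cs = t" using t cs_def by simp
            have "is_cycle E cs"
              unfolding is_cycle_def
            proof (intro conjI allI impI)
              show "3 \<le> length cs" using lcs t3 by simp
              show "distinct cs" using dP cs_def by simp
              fix s assume "Suc s < length cs"
              then show "E (cs ! s) (cs ! Suc s)" using cP lcs cs_def t by simp
            next
              have "cs \<noteq> []" using lcs t3 by auto
              then have "last cs = cs ! (t - 1)" using lcs by (simp add: last_conv_nth)
              also have "\<dots> = P ! t" using cs_def t t3 by simp
              finally have "last cs = P ! t" .
              moreover have "hd cs = P ! 1" using cs_def t t3 \<open>cs \<noteq> []\<close>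
                by (simp add: hd_conv_nth)
              ultimately show "E (last cs) (hd cs)" using sym Eu t v1_def by metis
            qed
            then show False using acyc by blast
          qed
          define Q where "Q = u # tl P"
          have tl1: "tl P ! 0 = P ! 1" using l2 by (simp add: nth_tl)
          have "gpath E S Q"
            unfolding gpath_def
          proof (intro conjI allI impI)
            show "Q \<noteq> []" using Q_def by simp
            show "distinct Q" using un dP Q_def by (cases P) auto
            show "set Q \<subseteq> S" using uS sP Q_def by (cases P) auto
            fix s assume "Suc s < length Q"
            then show "E (Q ! s) (Q ! Suc s)"
              using cP sym Eu tl1 Q_def v1_def ne by (cases s) (auto simp: nth_tl)
          qed
          moreover have "length Q = length P" using Q_def ne by simp
          ultimately have maxQ: "\<forall>R. gpath E S R \<longrightarrow> length R \<le> length Q" using maxP by simp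
          show ?thesis
          proof (intro ballI impI)
            fix w assume "w \<in> S" "E u w"
            then have "w = Q ! 1" using end_nbr[OF sym irr acyc \<open>gpath E S Q\<close> maxQ] Q_def by simp
            then show "w = v1" using Q_def tl1 v1_def by simp
          qed
        qed
        then show False using u L_def by auto
      qed
      show ?thesis
      proof (cases "card L \<ge> k + 1")
        case True
        define X where "X = insert v1 L"
        have XS: "X \<subseteq> S" using X_def v1S LN1 N1_def by auto
        have cX: "card X \<ge> k + 2" using X_def v1L finL True by simp
        have Xd: "X - {v1} = L" using X_def v1L by auto
        have clos: "\<forall>x\<in>X-{v1}. \<forall>y\<in>S. E x y \<longrightarrow> y \<in> X" using Xd L_def X_def by auto
        have inner: "\<forall>v\<in>X-{v1}. card {u\<in>X-{v1}. E v u} \<le> k"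
        proof
          fix v assume "v \<in> X - {v1}"
          then have vL: "v \<in> L" using Xd by simp
          have "{u\<in>X-{v1}. E v u} = {}" unfolding Xd
          proof (intro equalityI subsetI)
            fix u assume u: "u \<in> {u\<in>L. E v u}"
            then have "u \<in> S" using LN1 N1_def by auto
            then have "u = v1" using u vL L_def by auto
            then show "u \<in> {}" using u v1L by simp
          qed simp
          then show "card {u\<in>X-{v1}. E v u} \<le> k" by (metis card.empty zero_le)
        qed
        have "card (S - X) < card S" using XS fin X_def
          by (intro psubset_card_mono) auto
        then obtain D' where D': "D' \<subseteq> S - X" "card D' \<le> card (S - X) div (k+2)"
          "\<forall>v\<in>(S-X)-D'. card {u\<in>(S-X)-D'. E v u} \<le> k"
          using less.hyps[of "S - X"] fin by auto
        show ?thesis using sep_step[OF sym fin XS _ cX clos inner D'] X_def by simp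
      next
        case False
        have sub: "N1 \<subseteq> L \<union> {u. Suc (Suc 0) < length P \<and> u = P ! 2}" using claim by blast
        have l3: "Suc (Suc 0) < length P"
        proof (rule ccontr)
          assume "\<not> Suc (Suc 0) < length P"
          then have "N1 \<subseteq> L" using sub by auto
          then show False using card_mono[OF finL \<open>N1 \<subseteq> L\<close>] cN1 False by linarith
        qed
        define v2 where "v2 = P ! 2"
        have N1v2: "N1 \<subseteq> insert v2 L" using sub v2_def by auto
        have v2N1: "v2 \<in> N1" and v2L: "v2 \<notin> L"
        proof -
          have "\<not> N1 \<subseteq> L"
          proof
            assume "N1 \<subseteq> L"
            then show False using card_mono[OF finL \<open>N1 \<subseteq> L\<close>] cN1 False by linarith
          qed
          then show "v2 \<in> N1" "v2 \<notin> L" using N1v2 by auto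
        qed
        have "card N1 \<le> card (insert v2 L)" using N1v2 finL by (simp add: card_mono)
        then have cL: "card L \<ge> k" using cN1 finL v2L by simp
        have v12: "v1 \<noteq> v2" using v2N1 irr N1_def by auto
        define X where "X = insert v2 (insert v1 L)"
        have XS: "X \<subseteq> S" using X_def v1S LN1 N1_def v2N1 by auto
        have cX: "card X \<ge> k + 2" using X_def v1L v2L v12 finL cL by simp
        have Xd: "X - {v2} = insert v1 L" using X_def v1L v2L v12 by auto
        have clos: "\<forall>x\<in>X-{v2}. \<forall>y\<in>S. E x y \<longrightarrow> y \<in> X"
          using Xd L_def X_def N1v2 N1_def by auto
        have inner: "\<forall>v\<in>X-{v2}. card {u\<in>X-{v2}. E v u} \<le> k"
        proof
          fix v assume v: "v \<in> X - {v2}"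
          show "card {u\<in>X-{v2}. E v u} \<le> k"
          proof (cases "v = v1")
            case True
            then have "{u\<in>X-{v2}. E v u} \<subseteq> L" using Xd irr by auto
            then have "card {u\<in>X-{v2}. E v u} \<le> card L" using card_mono[OF finL] by blast
            then show ?thesis using \<open>\<not> k + 1 \<le> card L\<close> by linarith
          next
            case False
            then have vL: "v \<in> L" using v Xd by auto
            then have "{u\<in>X-{v2}. E v u} \<subseteq> {v1}" using L_def XS by auto
            then have "card {u\<in>X-{v2}. E v u} \<le> 1"
              by (rule card_sub_single)
            then show ?thesis using k1 by simp
          qed
        qed
        have "card (S - X) < card S" using XS fin X_def
          by (intro psubset_card_mono) auto
        then obtain D' where D': "D' \<subseteq> S - X" "card D' \<le> card (S - X) div (k+2)"
          "\<forall>v\<in>(S-X)-D'. card {u\<in>(S-X)-D'. E v u} \<le> k"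
          using less.hyps[of "S - X"] fin by auto
        show ?thesis using sep_step[OF sym fin XS _ cX clos inner D'] X_def by simp
      qed
    qed
  qed
qed

definition star_graph :: "nat \<Rightarrow> nat \<Rightarrow> nat \<Rightarrow> nat \<Rightarrow> nat \<Rightarrow> bool" where
  "star_graph k q n u v \<longleftrightarrow> u < n \<and> v < n \<and> u < q*(k+2) \<and> v < q*(k+2) \<and>
     u div (k+2) = v div (k+2) \<and> u \<noteq> v \<and> (u mod (k+2) = 0 \<or> v mod (k+2) = 0)"

lemma same_block:
  fixes u v m :: nat
  assumes "u div m = v div m" "u mod m = 0" "v mod m = 0"
  shows "u = v"
  by (metis assms div_mult_mod_eq)

lemma star_no_path3:
  assumes "star_graph k q n a b" "star_graph k q n b c" "star_graph k q n c y"
    "a \<noteq> c" "y \<noteq> b"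
  shows False
proof -
  have d: "a div (k+2) = b div (k+2)" "b div (k+2) = c div (k+2)" "c div (k+2) = y div (k+2)"
    using assms unfolding star_graph_def by auto
  show False
  proof (cases "b mod (k+2) = 0")
    case True
    have "c mod (k+2) \<noteq> 0"
    proof
      assume "c mod (k+2) = 0"
      then have "b = c" using same_block[OF d(2) True] by simp
      then show False using assms(2) unfolding star_graph_def by simp
    qed
    then have ym: "y mod (k+2) = 0" using assms(3) unfolding star_graph_def by auto
    have yd: "y div (k+2) = b div (k+2)" using d by linarith
    have "y = b" by (rule same_block[OF yd ym True])
    then show False using assms(5) by simp
  next
    case False
    then have am: "a mod (k+2) = 0" and cm: "c mod (k+2) = 0" using assms(1,2) unfolding star_graph_def by auto
    have ad: "a div (k+2) = c div (k+2)" using d by linarith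
    have "a = c" by (rule same_block[OF ad am cm])
    then show False using assms(4) by simp
  qed
qed

lemma star_forest: "forest n (star_graph k q n)"
  unfolding forest_def
proof (intro conjI)
  show "simple_graph n (star_graph k q n)"
    unfolding simple_graph_def star_graph_def by auto
  show "\<nexists>cs. is_cycle (star_graph k q n) cs"
  proof
    assume "\<exists>cs. is_cycle (star_graph k q n) cs"
    then obtain cs where cs: "is_cycle (star_graph k q n) cs" by blast
    let ?E = "star_graph k q n"
    have l: "length cs \<ge> 3" and dc: "distinct cs"
      and cc: "\<forall>t. Suc t < length cs \<longrightarrow> ?E (cs ! t) (cs ! Suc t)"
      and lh: "?E (last cs) (hd cs)" using cs unfolding is_cycle_def by auto
    have e1: "?E (cs!0) (cs!1)" using cc l by auto
    have "Suc 1 < length cs" using l by simp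
    then have "?E (cs!1) (cs!Suc 1)" using cc by blast
    then have e2: "?E (cs!1) (cs!2)" by (simp add: numeral_2_eq_2)
    have ac: "cs!0 \<noteq> cs!2" proof -
      have "(cs!0 = cs!2) = (0 = (2::nat))" by (rule nth_eq_iff_index_eq[OF dc]) (use l in auto)
      then show ?thesis by simp
    qed
    show False
    proof (cases "length cs = 3")
      case True
      have cne: "cs \<noteq> []" using True by auto
      have "last cs = cs ! (length cs - 1)" using cne by (rule last_conv_nth)
      then have "last cs = cs ! 2" using True by simp
      moreover have "hd cs = cs ! 0" using cne by (rule hd_conv_nth)
      ultimately have "?E (cs!2) (cs!0)" using lh by simp
      moreover have "cs!0 \<noteq> cs!1" proof -
      have "(cs!0 = cs!1) = (0 = (1::nat))" by (rule nth_eq_iff_index_eq[OF dc]) (use l in auto)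
      then show ?thesis by simp
    qed
      ultimately show False using star_no_path3[OF e1 e2 _ ac] by blast
    next
      case False
      then have "Suc 2 < length cs" using l by simp
      then have "?E (cs!2) (cs!Suc 2)" using cc by blast
      then have "?E (cs!2) (cs!3)" by (simp add: numeral_3_eq_3 numeral_2_eq_2)
      moreover have "cs!3 \<noteq> cs!1" proof -
      have "(cs!3 = cs!1) = (3 = (1::nat))" by (rule nth_eq_iff_index_eq[OF dc]) (use l False in auto)
      then show ?thesis by simp
    qed
      ultimately show False using star_no_path3[OF e1 e2 _ ac] by blast
    qed
  qed
qed

lemma block_div:
  fixes b m u :: nat
  assumes "b*m \<le> u" "u < b*m + m"
  shows "u div m = b"
  using assms by (intro div_nat_eqI) (auto simp: algebra_simps)

lemma star_sparse_bound:
  fixes k q n :: nat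
  assumes S: "S \<subseteq> {0..<n}" and sp: "\<forall>v\<in>S. card {u\<in>S. star_graph k q n v u} \<le> k"
  shows "card S \<le> q*(k+1) + (n - q*(k+2))"
proof -
  let ?m = "k+2"
  define B where "B b = S \<inter> {b*?m..<b*?m+?m}" for b
  have finS: "finite S" using S finite_subset by blast
  have cover: "S \<subseteq> (\<Union>b\<in>{..<q}. B b) \<union> (S \<inter> {q*?m..<n})"
  proof
    fix u assume u: "u \<in> S"
    show "u \<in> (\<Union>b\<in>{..<q}. B b) \<union> (S \<inter> {q*?m..<n})"
    proof (cases "u < q*?m")
      case True
      define b where "b = u div ?m"
      have "b < q" using True b_def by (simp add: less_mult_imp_div_less)
      moreover have "b*?m \<le> u" unfolding b_def by (rule div_times_less_eq_dividend)
      moreover have "u < b*?m + ?m" unfolding b_def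
        using mod_less_divisor[of "k+2" u] div_mult_mod_eq[of u "k+2"] by linarith
      ultimately show ?thesis using u B_def by auto
    next
      case False
      then show ?thesis using u S by auto
    qed
  qed
  have cb: "card (B b) \<le> k + 1" if b: "b < q" for b
  proof -
    define c where "c = b*?m"
    have bq: "c + ?m \<le> q*?m" using b c_def
      by (metis add.commute mult_Suc less_eq_Suc_le mult_le_mono1)
    have inB: "u div ?m = b" "u < q*?m" if "u \<in> B b" for u
      using that B_def c_def bq block_div[of b ?m u] by auto
    show ?thesis
    proof (cases "c \<in> S")
      case True
      have "B b \<subseteq> insert c {u\<in>S. star_graph k q n c u}"
      proof
        fix u assume u: "u \<in> B b"
        show "u \<in> insert c {u\<in>S. star_graph k q n c u}"
        proof (cases "u = c")
          case False
          have cd: "c div ?m = b" unfolding c_def by (rule div_mult_self_is_m) simp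
          have cm: "c mod ?m = 0" unfolding c_def by (rule mod_mult_self2_is_0)
          have "c < q*?m" using bq by simp
          moreover have "u \<in> S" "c \<in> S" using u B_def True by auto
          ultimately have "star_graph k q n c u"
            unfolding star_graph_def using inB[OF u] S False cd cm by auto
          then show ?thesis using u B_def by auto
        qed simp
      qed
      then have "card (B b) \<le> card (insert c {u\<in>S. star_graph k q n c u})"
        using finS by (intro card_mono) auto
      also have "\<dots> \<le> Suc (card {u\<in>S. star_graph k q n c u})"
        by (rule card_insert_le_m1) simp_all
      also have "\<dots> \<le> k + 1" using sp True by simp
      finally show ?thesis .
    next
      case False
      have "B b \<subseteq> {c+1..<c+?m}"
      proof
        fix x assume x: "x \<in> B b"
        then have xs: "x \<in> S" "c \<le> x" "x < c + ?m" using B_def c_def by auto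
        then have "x \<noteq> c" using False by auto
        then show "x \<in> {c+1..<c+?m}" using xs by simp
      qed
      then have "card (B b) \<le> card {c+1..<c+?m}" by (intro card_mono) auto
      then show ?thesis by simp
    qed
  qed
  have "card S \<le> card ((\<Union>b\<in>{..<q}. B b) \<union> (S \<inter> {q*?m..<n}))"
    using cover B_def finS by (intro card_mono) auto
  also have "\<dots> \<le> card (\<Union>b\<in>{..<q}. B b) + card (S \<inter> {q*?m..<n})"
    by (rule card_Un_le)
  also have "card (\<Union>b\<in>{..<q}. B b) \<le> (\<Sum>b\<in>{..<q}. card (B b))"
    by (rule card_UN_le) simp
  also have "(\<Sum>b\<in>{..<q}. card (B b)) \<le> q * (k+1)"
    using sum_bounded_above[of "{..<q}" "\<lambda>b. card (B b)" "k+1"] cb by simp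
  also have "card (S \<inter> {q*?m..<n}) \<le> card {q*?m..<n}" by (intro card_mono) auto
  finally show ?thesis by simp
qed

lemma no_dense:
  assumes F: "forest n E" and ik: "i \<ge> k + 3" and D: "dense_set n E k i S"
  shows False
proof -
  have sym: "\<forall>u v. E u v \<longrightarrow> E v u" and irr: "\<forall>v. \<not> E v v"
    and acyc: "\<nexists>cs. is_cycle E cs" using F unfolding forest_def simple_graph_def by auto
  have SS: "S \<subseteq> {0..<n}" and cS: "card S = i"
    and nd: "\<forall>v\<in>S. card {u\<in>S. u \<noteq> v \<and> \<not> E v u} \<le> k"
    using D unfolding dense_set_def by auto
  have finS: "finite S" using SS finite_subset by blast
  have "S \<noteq> {}" using cS ik by auto
  then obtain v where v: "v \<in> S" "card {u\<in>S. E v u} \<le> 1"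
    using low_deg_exists[OF sym irr acyc finS] by blast
  have "S - {v} \<subseteq> {u\<in>S. E v u} \<union> {u\<in>S. u \<noteq> v \<and> \<not> E v u}" by auto
  then have "card (S - {v}) \<le> card ({u\<in>S. E v u} \<union> {u\<in>S. u \<noteq> v \<and> \<not> E v u})"
    using finS by (intro card_mono) auto
  also have "\<dots> \<le> card {u\<in>S. E v u} + card {u\<in>S. u \<noteq> v \<and> \<not> E v u}"
    by (rule card_Un_le)
  finally have c1: "card (S - {v}) \<le> card {u\<in>S. E v u} + card {u\<in>S. u \<noteq> v \<and> \<not> E v u}" .
  have "card {u\<in>S. u \<noteq> v \<and> \<not> E v u} \<le> k" using nd v(1) by blast
  then have "card (S - {v}) \<le> 1 + k" using c1 v(2) by linarith
  moreover have "card (S - {v}) = i - 1" using v finS cS by simp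
  ultimately show False using ik by simp
qed

theorem theorem3p2:
  fixes k i j :: nat
  assumes "k \<ge> 1" and "i \<ge> k + 3" and "j \<ge> k + 2"
  shows "forest_defective_ramsey k i j = j + (j - 1) div (k + 1)"
proof -
  define q where "q = (j - 1) div (k + 1)"
  define r where "r = (j - 1) mod (k + 1)"
  define N where "N = j + q"
  have hj: "j - 1 = q * (k+1) + r" unfolding q_def r_def by (rule div_mult_mod_eq[symmetric])
  have rk: "r < k + 1" unfolding r_def by simp
  have e1: "(k+2) * q = q*(k+1) + q" by (simp add: algebra_simps)
  have e2: "q * (k+2) = q*(k+1) + q" by (simp add: algebra_simps)
  have j1: "j \<ge> 1" using assms by simp
  have Ndiv: "N div (k+2) = q"
  proof (rule div_nat_eqI)
    show "(k+2) * q \<le> N" using e1 hj j1 N_def by linarith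
    have "(k+2) * Suc q = q*(k+1) + q + (k+2)" using e1 by simp
    then show "N < (k+2) * Suc q" using hj j1 N_def rk by linarith
  qed
  define P where "P n \<longleftrightarrow> (\<forall>E. forest n E \<longrightarrow>
        (\<exists>S. dense_set n E k i S) \<or> (\<exists>S. sparse_set n E k j S))" for n
  have PN: "P N"
    unfolding P_def
  proof (intro allI impI disjI2)
    fix E assume F: "forest N E"
    have sym: "\<forall>u v. E u v \<longrightarrow> E v u" and irr: "\<forall>v. \<not> E v v"
      and acyc: "\<nexists>cs. is_cycle E cs" using F unfolding forest_def simple_graph_def by auto
    obtain D where D: "D \<subseteq> {0..<N}" "card D \<le> card {0..<N} div (k+2)"
      "\<forall>v\<in>{0..<N}-D. card {u\<in>{0..<N}-D. E v u} \<le> k"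
      using sparse_delete[OF sym irr acyc assms(1), of "{0..<N}"] by auto
    have "card D \<le> q" using D(2) Ndiv by simp
    moreover have "card ({0..<N} - D) = N - card D" using D(1)
      by (simp add: card_Diff_subset finite_subset)
    ultimately have "j \<le> card ({0..<N} - D)" using N_def by simp
    then obtain T where T: "T \<subseteq> {0..<N} - D" "card T = j" "finite T"
      by (rule obtain_subset_with_card_n)
    show "\<exists>S. sparse_set N E k j S"
    proof (intro exI[of _ T])
      show "sparse_set N E k j T"
        unfolding sparse_set_def
      proof (intro conjI ballI)
        show "T \<subseteq> {0..<N}" using T by auto
        show "card T = j" using T by simp
        fix v assume v: "v \<in> T"
        have "{u\<in>T. E v u} \<subseteq> {u\<in>{0..<N}-D. E v u}" using T by auto
        then have "card {u\<in>T. E v u} \<le> card {u\<in>{0..<N}-D. E v u}"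
          by (intro card_mono) auto
        moreover have "v \<in> {0..<N} - D" using v T by blast
        then have "card {u\<in>{0..<N}-D. E v u} \<le> k" using D(3) by blast
        ultimately show "card {u\<in>T. E v u} \<le> k" by linarith
      qed
    qed
  qed
  have notP: "\<not> P m" if m: "m < N" for m
  proof
    assume Pm: "P m"
    have F: "forest m (star_graph k q m)" by (rule star_forest)
    then have "(\<exists>S. dense_set m (star_graph k q m) k i S) \<or> (\<exists>S. sparse_set m (star_graph k q m) k j S)"
      using Pm unfolding P_def by blast
    then show False
    proof
      assume "\<exists>S. dense_set m (star_graph k q m) k i S"
      then show False using no_dense[OF F assms(2)] by blast
    next
      assume "\<exists>S. sparse_set m (star_graph k q m) k j S"
      then obtain S where S: "S \<subseteq> {0..<m}" "card S = j"
        "\<forall>v\<in>S. card {u\<in>S. star_graph k q m v u} \<le> k"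
        unfolding sparse_set_def by blast
      have "card S \<le> q*(k+1) + (m - q*(k+2))" by (rule star_sparse_bound[OF S(1) S(3)])
      then show False using S(2) m N_def hj e2 j1 by linarith
    qed
  qed
  have "(LEAST n. P n) = N"
  proof (rule Least_equality)
    show "P N" by (rule PN)
    fix m assume "P m"
    then show "N \<le> m" using notP by (meson not_le)
  qed
  then show ?thesis unfolding forest_defective_ramsey_def P_def N_def q_def by simp
qed

end
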